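(* Let $n\geq 1$ and $a,b\in\mathbb{C}$. Let $\mathcal{P}_n$ be the set of Catalan paths of order $n$. Then $$\sum_{P\in\mathcal{P}_n}a^{\,n-\mathrm{enor}(P)}b^{\,\mathrm{enor}(P)}=\sum_{P\in\mathcal{P}_n}a^{\,n-\mathrm{valley}(P)}b^{\,\mathrm{valley}(P)},$$ and both equal $\sum_{k=0}^{n-1}\frac{1}{n}\binom{n}{k}\binom{n}{k+1}a^{n-k}b^k$.
   Context: A Catalan path of order $n$ is a word $P=p_1p_2\cdots p_{2n}$ in the steps $\mathbf N=(0,1)$ and $\mathbf E=(1,0)$ with $n$ of each, describing a lattice path from $(0,0)$ to $(n,n)$ that never goes below the line $y=x$. $\mathrm{valley}(P)$ is the number of indices $i$ with $p_i=\mathbf E$ and $p_{i+1}=\mathbf N$. $\mathrm{enor}(P)$ is the number of indices $i\in\{1,\dots,n\}$ with $p_{2i}=\mathbf N$ (north steps in even positions). *)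

theory Defs
  imports Complex_Main
begin

text \<open>Steps: N = (0,1), E = (1,0). A path is a list of steps; position i (1-based)
  of the word corresponds to list index i - 1.\<close>

datatype step = N | E

definition count_step :: "step \<Rightarrow> step list \<Rightarrow> nat" where
  "count_step s P = length (filter (\<lambda>x. x = s) P)"

definition catalan_path :: "nat \<Rightarrow> step list \<Rightarrow> bool" where
  "catalan_path n P \<longleftrightarrow> length P = 2 * n \<and> count_step N P = n \<and> count_step E P = n \<and>
     (\<forall>k \<le> length P. count_step E (take k P) \<le> count_step N (take k P))"

definition catalan_paths :: "nat \<Rightarrow> step list set" where
  "catalan_paths n = {P. catalan_path n P}"

definition valley :: "step list \<Rightarrow> nat" where
  "valley P = card {i. 1 \<le> i \<and> i < length P \<and> P ! (i - 1) = E \<and> P ! i = N}"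

definition enor :: "step list \<Rightarrow> nat" where
  "enor P = card {i \<in> {1 .. length P div 2}. P ! (2 * i - 1) = N}"

end

theory Submission imports Defs begin

definition bin :: "int \<Rightarrow> int \<Rightarrow> int" where
  "bin n k = (if 0 \<le> n \<and> 0 \<le> k then int (nat n choose nat k) else 0)"

lemma bin_neg1: "k < 0 \<Longrightarrow> bin n k = 0" by (simp add: bin_def)
lemma bin_neg2: "n < 0 \<Longrightarrow> bin n k = 0" by (simp add: bin_def)
lemma bin_gt: "n < k \<Longrightarrow> bin n k = 0" by (auto simp add: bin_def)
lemma bin_0: "0 \<le> n \<Longrightarrow> bin n 0 = 1" by (simp add: bin_def)

lemma bin_pascal: assumes "0 \<le> n" shows "bin (n+1) (k+1) = bin n k + bin n (k+1)"
proof (cases "k < -1")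
  case True then show ?thesis by (simp add: bin_def)
next
  case False
  show ?thesis
  proof (cases "k = -1")
    case True then show ?thesis using assms by (simp add: bin_def)
  next
    case False
    then have k0: "0 \<le> k" using \<open>\<not> k < -1\<close> by simp
    have "nat (n+1) = Suc (nat n)" "nat (k+1) = Suc (nat k)" using assms k0 by auto
    then show ?thesis using assms k0 by (simp add: bin_def)
  qed
qed

lemma bin_pascal': "1 \<le> m \<Longrightarrow> bin m k = bin (m-1) (k-1) + bin (m-1) k"
  using bin_pascal[of "m-1" "k-1"] by simp

lemma bin_sym: assumes "0 \<le> n" shows "bin n (n - k) = bin n k"
proof (cases "0 \<le> k \<and> k \<le> n")
  case True
  then have "nat (n - k) = nat n - nat k" "nat k \<le> nat n" by auto
  then show ?thesis using True assms binomial_symmetric[OF \<open>nat k \<le> nat n\<close>] by (simp add: bin_def)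
next
  case False
  then show ?thesis using assms by (auto simp: bin_def)
qed

definition F :: "int \<Rightarrow> int \<Rightarrow> int \<Rightarrow> int" where
  "F x y k = bin (x-1) k * bin y k - bin x (k+1) * bin (y-1) (k-1)"
definition G :: "int \<Rightarrow> int \<Rightarrow> int \<Rightarrow> int" where
  "G x y k = bin (x-1) (k-1) * bin (y-1) k - bin (x-1) k * bin (y-1) (k-1)"

lemma I1: assumes "1 \<le> u" "1 \<le> y" shows "F (u+1) y k = F u y k + G u y k"
proof -
  have e1: "bin u k = bin (u-1) (k-1) + bin (u-1) k" using bin_pascal' assms by simp
  have e2: "bin (u+1) (k+1) = bin u k + bin u (k+1)" using bin_pascal assms by simp
  have e3: "bin y k = bin (y-1) (k-1) + bin (y-1) k" using bin_pascal' assms by simp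
  show ?thesis unfolding F_def G_def using e1 e2 e3 by (simp add: algebra_simps)
qed

lemma I2: assumes "1 \<le> x" "x \<le> y" shows "G x (y+1) k = G x y k + F x y (k-1)"
proof -
  have e1: "bin y k = bin (y-1) (k-1) + bin (y-1) k" using bin_pascal' assms by simp
  have e2: "bin x k = bin (x-1) (k-1) + bin (x-1) k" using bin_pascal' assms by simp
  have e3: "bin y (k-1) = bin (y-1) (k-2) + bin (y-1) (k-1)" using bin_pascal'[of y "k-1"] assms by simp
  show ?thesis unfolding F_def G_def using e1 e2 e3 by (simp add: algebra_simps)
qed

lemma I3: "G x x k = 0" by (simp add: G_def)

lemma F1: assumes "1 \<le> y" shows "F 1 y k = (if k = 0 then 1 else 0)"
proof (cases "k \<le> 0")
  case True then show ?thesis using assms by (cases "k = 0") (auto simp: F_def bin_def)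
next
  case False
  then have "0 < nat k" "Suc 0 < nat (k+1)" by auto
  then show ?thesis using False by (simp add: F_def bin_def binomial_eq_0)
qed

lemma Ffin: assumes "1 \<le> n" shows "n * F n n k = bin n k * bin n (k+1)"
proof (cases "0 \<le> k")
  case False then show ?thesis by (simp add: F_def bin_neg1)
next
  case True
  define nn where "nn = nat n" 
  define kk where "kk = nat k"
  have n: "n = int nn" and k: "k = int kk" using True assms by (auto simp: nn_def kk_def)
  have nn1: "nn \<ge> 1" using assms n by simp
  obtain m where m: "nn = Suc m" using nn1 by (cases nn) auto
  show ?thesis
  proof (cases kk)
    case 0 then show ?thesis using n k nn1 by (simp add: F_def bin_def)
  next
    case (Suc j)
    define A where "A = nn choose kk"
    define B where "B = nn choose Suc kk"
    define X where "X = m choose kk"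
    define Y where "Y = m choose j"
    have a2: "Suc kk * B = nn * X"
      using binomial_absorption[of kk nn] m by (simp add: B_def X_def)
    have a3: "kk * A = nn * Y"
      using binomial_absorption[of j nn] m Suc by (simp add: A_def Y_def)
    have a2': "int (Suc kk) * int B = int nn * int X" using a2 by (metis of_nat_mult)
    have a3': "int kk * int A = int nn * int Y" using a3 by (metis of_nat_mult)
    have bF: "F n n k = int X * int A - int B * int Y"
    proof -
      have f: "nat n = nn" "nat k = kk" "nat (n-1) = m" "nat (k+1) = Suc kk" "nat (k-1) = j"
        using n k m Suc by auto
      show ?thesis unfolding F_def bin_def using f n k Suc nn1 by (simp add: A_def B_def X_def Y_def)
    qed
    have bR: "bin n k * bin n (k+1) = int A * int B"
      unfolding bin_def using n k by (auto simp: A_def B_def nat_add_distrib)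
    have "int nn * (int X * int A - int B * int Y) = (int nn * int X) * int A - (int nn * int Y) * int B"
      by (simp add: algebra_simps)
    also have "\<dots> = int (Suc kk) * int B * int A - int kk * int A * int B" using a2' a3' by simp
    also have "\<dots> = int A * int B" by (simp add: algebra_simps)
    finally show ?thesis using bF bR n by simp
  qed
qed


definition H :: "int \<Rightarrow> int \<Rightarrow> int \<Rightarrow> int" where
  "H x y k = (let m = (x+y) div 2; p = (x+y) mod 2 in
     bin m k * bin (m+p) (y-k) - bin (m+1) (k+1) * bin (m+p-1) (y-k))"

lemma Hev: "x + y = 2*m \<Longrightarrow> H x y k = bin m k * bin m (y-k) - bin (m+1) (k+1) * bin (m-1) (y-k)"
  unfolding H_def Let_def by simp

lemma Hod: "x + y = 2*m+1 \<Longrightarrow> H x y k = bin m k * bin (m+1) (y-k) - bin (m+1) (k+1) * bin m (y-k)"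
  unfolding H_def Let_def by simp

lemma H1: assumes "0 \<le> x" "1 \<le> y"
  shows "H x y k = H (x-1) y k + H x (y-1) (k - (if even (x+y) then 1 else 0))"
proof (cases "even (x+y)")
  case True
  obtain m where m: "x + y = 2*m" using True by (rule evenE)
  have m1: "1 \<le> m" using m assms by simp
  have h0: "H x y k = bin m k * bin m (y-k) - bin (m+1) (k+1) * bin (m-1) (y-k)" using Hev[OF m] .
  have h1: "H (x-1) y k = bin (m-1) k * bin m (y-k) - bin m (k+1) * bin (m-1) (y-k)"
    using Hod[of "x-1" y "m-1" k] m by simp
  have h2: "H x (y-1) (k-1) = bin (m-1) (k-1) * bin m (y-k) - bin m k * bin (m-1) (y-k)"
    using Hod[of x "y-1" "m-1" "k-1"] m by simp
  have e1: "bin m k = bin (m-1) (k-1) + bin (m-1) k" using bin_pascal' m1 by simp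
  have e2: "bin (m+1) (k+1) = bin m k + bin m (k+1)" using bin_pascal m1 by simp
  show ?thesis using True h0 h1 h2 e1 e2 by (simp add: algebra_simps)
next
  case False
  obtain m where m: "x + y = 2*m+1" using False by (rule oddE)
  show ?thesis
  proof (cases "m = 0")
    case True
    then have xy: "x = 0" "y = 1" using m assms by auto
    show ?thesis using xy
      by (simp add: H_def bin_def)
  next
    case False
    have m1: "1 \<le> m" using m assms False by simp
    have h0: "H x y k = bin m k * bin (m+1) (y-k) - bin (m+1) (k+1) * bin m (y-k)" using Hod[OF m] .
    have h1: "H (x-1) y k = bin m k * bin m (y-k) - bin (m+1) (k+1) * bin (m-1) (y-k)"
      using Hev[of "x-1" y m k] m by simp
    have h2: "H x (y-1) k = bin m k * bin m (y-k-1) - bin (m+1) (k+1) * bin (m-1) (y-k-1)"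
      using Hev[of x "y-1" m k] m by (simp add: algebra_simps)
    have e1: "bin (m+1) (y-k) = bin m (y-k-1) + bin m (y-k)" using bin_pascal[of m "y-k-1"] m1 by simp
    have e2: "bin m (y-k) = bin (m-1) (y-k-1) + bin (m-1) (y-k)" using bin_pascal' m1 by simp
    show ?thesis using \<open>odd (x+y)\<close> h0 h1 h2 e1 e2 by (simp add: algebra_simps)
  qed
qed

lemma H2: assumes "0 \<le> y" shows "H (-1) y k = 0"
proof (cases "even (-1 + y)")
  case True
  obtain j where j: "-1 + y = 2*j" using True by (rule evenE)
  show ?thesis using Hev[OF j, of k] j by (cases "k \<le> j") (auto simp: bin_gt)
next
  case False
  obtain j where j: "-1 + y = 2*j+1" using False by (rule oddE)
  show ?thesis using Hod[OF j, of k] j by (cases "k \<le> j") (auto simp: bin_gt)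
qed

lemma H3: assumes "0 \<le> y" shows "H (y+1) y k = 0"
proof -
  have j: "(y+1) + y = 2*y+1" by simp
  have s1: "bin (y+1) (y-k) = bin (y+1) (k+1)" using bin_sym[of "y+1" "k+1"] assms by simp
  have s2: "bin y (y-k) = bin y k" using bin_sym[of y k] assms by simp
  show ?thesis using Hod[OF j, of k] s1 s2 by simp
qed

lemma H4: assumes "0 \<le> x" "x \<le> y" shows "H x y (-1) = 0"
proof (cases "even (x+y)")
  case True
  obtain m where m: "x + y = 2*m" using True by (rule evenE)
  show ?thesis using Hev[OF m] m assms by (simp add: bin_neg1 bin_gt)
next
  case False
  obtain m where m: "x + y = 2*m+1" using False by (rule oddE)
  show ?thesis using Hod[OF m] m assms by (simp add: bin_neg1 bin_gt)
qed

lemma H5: "H 0 0 k = (if k = 0 then 1 else 0)"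
  by (auto simp: H_def bin_def)

lemma Hfin: assumes "1 \<le> n" shows "H n n k = F n n k"
proof -
  have m: "n + n = 2*n" by simp
  have s1: "bin n (n-k) = bin n k" using bin_sym assms by simp
  have s2: "bin (n-1) (n-k) = bin (n-1) (k-1)" using bin_sym[of "n-1" "k-1"] assms by simp
  have e1: "bin n k = bin (n-1) (k-1) + bin (n-1) k" using bin_pascal' assms by simp
  have e2: "bin (n+1) (k+1) = bin n k + bin n (k+1)" using bin_pascal assms by simp
  show ?thesis using Hev[OF m, of k] s1 s2 e1 e2 unfolding F_def by (simp add: algebra_simps)
qed


lemma count_snoc: "count_step s (P @ [t]) = count_step s P + (if t = s then 1 else 0)"
  by (simp add: count_step_def)

lemma count_len: "count_step N P + count_step E P = length P"
proof (induction P)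
  case Nil then show ?case by (simp add: count_step_def)
next
  case (Cons a P) then show ?case by (cases a) (auto simp: count_step_def)
qed

definition okp :: "step list \<Rightarrow> bool" where
  "okp P \<longleftrightarrow> (\<forall>k \<le> length P. count_step E (take k P) \<le> count_step N (take k P))"

definition S :: "nat \<Rightarrow> nat \<Rightarrow> step list set" where
  "S x y = {P. count_step E P = x \<and> count_step N P = y \<and> okp P}"

lemma okp_snoc: "okp (P @ [s]) \<longleftrightarrow> okp P \<and> count_step E (P @ [s]) \<le> count_step N (P @ [s])"
proof
  assume a: "okp (P @ [s])"
  have "count_step E (P @ [s]) \<le> count_step N (P @ [s])"
    using a unfolding okp_def by (metis le_refl length_append_singleton take_all)
  moreover have "okp P" unfolding okp_def
  proof (intro allI impI)
    fix k assume "k \<le> length P"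
    then show "count_step E (take k P) \<le> count_step N (take k P)"
    proof -
      have "k \<le> length (P @ [s])" using \<open>k \<le> length P\<close> by simp
      then have "count_step E (take k (P @ [s])) \<le> count_step N (take k (P @ [s]))"
        using a unfolding okp_def by blast
      then show ?thesis using \<open>k \<le> length P\<close> by simp
    qed
  qed
  ultimately show "okp P \<and> count_step E (P @ [s]) \<le> count_step N (P @ [s])" by simp
next
  assume a: "okp P \<and> count_step E (P @ [s]) \<le> count_step N (P @ [s])"
  show "okp (P @ [s])" unfolding okp_def
  proof (intro allI impI)
    fix k assume k: "k \<le> length (P @ [s])"
    show "count_step E (take k (P @ [s])) \<le> count_step N (take k (P @ [s]))"
    proof (cases "k \<le> length P")
      case True then show ?thesis using a unfolding okp_def by simp
    next
      case False then have "k = length (P @ [s])" using k by simp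
      then show ?thesis using a by simp
    qed
  qed
qed

lemma okp_Nil: "okp []" by (simp add: okp_def count_step_def)

lemma okp_le: "okp P \<Longrightarrow> count_step E P \<le> count_step N P"
  unfolding okp_def by (metis order_refl take_all)

lemma S_empty: "y < x \<Longrightarrow> S x y = {}"
  using okp_le by (fastforce simp: S_def)

lemma finite_step: "finite (UNIV :: step set)"
proof -
  have "UNIV = {N, E}" using step.exhaust by auto
  then show ?thesis by (metis finite.emptyI finite.insertI)
qed

lemma S_finite: "finite (S x y)"
proof -
  have "S x y \<subseteq> {xs. set xs \<subseteq> UNIV \<and> length xs = y + x}"
    using count_len by (auto simp: S_def)
  moreover have "finite {xs. set xs \<subseteq> (UNIV::step set) \<and> length xs = y + x}"
    using finite_lists_length_eq[OF finite_step] by blast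
  ultimately show ?thesis by (rule finite_subset)
qed

lemma S00: "S 0 0 = {[]}"
proof -
  have "P \<in> S 0 0 \<Longrightarrow> P = []" for P using count_len[of P] by (simp add: S_def)
  then show ?thesis by (auto simp: S_def okp_Nil count_step_def)
qed

lemma lastcnt: "P \<noteq> [] \<Longrightarrow> 0 < count_step (last P) P"
  by (simp add: count_step_def filter_empty_conv)

lemma card_lastE:
  "card {P \<in> S x y. P \<noteq> [] \<and> last P = E \<and> Phi P} =
     (if 1 \<le> x \<and> x \<le> y then card {Q \<in> S (x-1) y. Phi (Q @ [E])} else 0)"
proof (cases "1 \<le> x \<and> x \<le> y")
  case True
  have "{P \<in> S x y. P \<noteq> [] \<and> last P = E \<and> Phi P} = (\<lambda>Q. Q @ [E]) ` {Q \<in> S (x-1) y. Phi (Q @ [E])}"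
  proof (intro set_eqI iffI)
    fix P assume P: "P \<in> {P \<in> S x y. P \<noteq> [] \<and> last P = E \<and> Phi P}"
    then have "P = butlast P @ [E]" using append_butlast_last_id[of P] by simp
    then obtain Q where eq: "P = Q @ [E]" by blast
    have "Q @ [E] \<in> S x y" "Phi (Q @ [E])" using P eq by auto
    then have mem: "Q \<in> {Q \<in> S (x-1) (y). Phi (Q @ [E])}" by (auto simp: S_def count_snoc okp_snoc)
    show "P \<in> (\<lambda>Q. Q @ [E]) ` {Q \<in> S (x-1) (y). Phi (Q @ [E])}" using eq mem by blast
  next
    fix P assume "P \<in> (\<lambda>Q. Q @ [E]) ` {Q \<in> S (x-1) y. Phi (Q @ [E])}"
    then obtain Q where Q: "P = Q @ [E]" "Q \<in> S (x-1) y" "Phi (Q @ [E])" by auto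
    then show "P \<in> {P \<in> S x y. P \<noteq> [] \<and> last P = E \<and> Phi P}"
      using True okp_snoc[of Q E] by (simp add: S_def count_snoc)
  qed
  moreover have "inj_on (\<lambda>Q. Q @ [E]) A" for A by (simp add: inj_on_def)
  ultimately show ?thesis using True by (simp add: card_image)
next
  case False
  have e: "{P \<in> S x y. P \<noteq> [] \<and> last P = E \<and> Phi P} = {}"
  proof (cases "x = 0")
    case True
    show ?thesis using True by (auto simp: S_def dest: lastcnt)
  next
    case False
    then show ?thesis using \<open>\<not> (1 \<le> x \<and> x \<le> y)\<close> S_empty by auto
  qed
  show ?thesis using False unfolding e by auto
qed

lemma card_lastN:
  "card {P \<in> S x y. P \<noteq> [] \<and> last P = N \<and> Phi P} =
     (if 1 \<le> y then card {Q \<in> S x (y-1). Phi (Q @ [N])} else 0)"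
proof (cases "1 \<le> y")
  case True
  have "{P \<in> S x y. P \<noteq> [] \<and> last P = N \<and> Phi P} = (\<lambda>Q. Q @ [N]) ` {Q \<in> S x (y-1). Phi (Q @ [N])}"
  proof (intro set_eqI iffI)
    fix P assume P: "P \<in> {P \<in> S x y. P \<noteq> [] \<and> last P = N \<and> Phi P}"
    then have "P = butlast P @ [N]" using append_butlast_last_id[of P] by simp
    then obtain Q where eq: "P = Q @ [N]" by blast
    have "Q @ [N] \<in> S x y" "Phi (Q @ [N])" using P eq by auto
    then have mem: "Q \<in> {Q \<in> S (x) (y-1). Phi (Q @ [N])}" by (auto simp: S_def count_snoc okp_snoc)
    show "P \<in> (\<lambda>Q. Q @ [N]) ` {Q \<in> S (x) (y-1). Phi (Q @ [N])}" using eq mem by blast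
  next
    fix P assume "P \<in> (\<lambda>Q. Q @ [N]) ` {Q \<in> S x (y-1). Phi (Q @ [N])}"
    then obtain Q where Q: "P = Q @ [N]" "Q \<in> S x (y-1)" "Phi (Q @ [N])" by auto
    then show "P \<in> {P \<in> S x y. P \<noteq> [] \<and> last P = N \<and> Phi P}"
      using True okp_snoc[of Q N] okp_le[of Q] by (simp add: S_def count_snoc)
  qed
  moreover have "inj_on (\<lambda>Q. Q @ [N]) A" for A by (simp add: inj_on_def)
  ultimately show ?thesis using True by (simp add: card_image)
next
  case False
  have e: "{P \<in> S x y. P \<noteq> [] \<and> last P = N \<and> Phi P} = {}" using False by (auto simp: S_def dest: lastcnt)
  show ?thesis using False unfolding e by simp
qed

lemma card_split3:
  "card {P \<in> S x y. Phi P} = (if x = 0 \<and> y = 0 \<and> Phi [] then 1 else 0)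
     + card {P \<in> S x y. P \<noteq> [] \<and> last P = E \<and> Phi P} + card {P \<in> S x y. P \<noteq> [] \<and> last P = N \<and> Phi P}"
proof -
  let ?A = "{P \<in> S x y. P = [] \<and> Phi P}"
  let ?B = "{P \<in> S x y. P \<noteq> [] \<and> last P = E \<and> Phi P}"
  let ?C = "{P \<in> S x y. P \<noteq> [] \<and> last P = N \<and> Phi P}"
  have u: "{P \<in> S x y. Phi P} = ?A \<union> (?B \<union> ?C)" using step.exhaust by auto
  have f: "finite ?A" "finite ?B" "finite ?C" using S_finite by auto
  have c: "card {P \<in> S x y. Phi P} = card ?A + (card ?B + card ?C)"
    unfolding u using f by (subst card_Un_disjoint; auto)+
  have "?A = (if x = 0 \<and> y = 0 \<and> Phi [] then {[]} else {})"
    using S00 by (auto simp: S_def okp_Nil count_step_def)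
  then have "card ?A = (if x = 0 \<and> y = 0 \<and> Phi [] then 1 else 0)" by simp
  then show ?thesis using c by simp
qed


lemma valley_snoc: "valley (Q @ [s]) = valley Q + (if s = N \<and> Q \<noteq> [] \<and> last Q = E then 1 else 0)"
proof -
  let ?L = "length Q"
  let ?A = "{i. 1 \<le> i \<and> i < ?L \<and> Q ! (i - 1) = E \<and> Q ! i = N}"
  have eq: "{i. 1 \<le> i \<and> i < length (Q @ [s]) \<and> (Q @ [s]) ! (i - 1) = E \<and> (Q @ [s]) ! i = N}
      = ?A \<union> (if s = N \<and> Q \<noteq> [] \<and> last Q = E then {?L} else {})"
  proof (intro set_eqI iffI)
    fix i assume i: "i \<in> {i. 1 \<le> i \<and> i < length (Q @ [s]) \<and> (Q @ [s]) ! (i - 1) = E \<and> (Q @ [s]) ! i = N}"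
    show "i \<in> ?A \<union> (if s = N \<and> Q \<noteq> [] \<and> last Q = E then {?L} else {})"
    proof (cases "i < ?L")
      case True
      then have "i - 1 < ?L" by simp
      then show ?thesis using i True by (auto simp: nth_append)
    next
      case False
      then have iL: "i = ?L" using i by simp
      then have "Q \<noteq> []" using i by auto
      then show ?thesis using i iL by (auto simp: nth_append last_conv_nth)
    qed
  next
    fix i assume i: "i \<in> ?A \<union> (if s = N \<and> Q \<noteq> [] \<and> last Q = E then {?L} else {})"
    show "i \<in> {i. 1 \<le> i \<and> i < length (Q @ [s]) \<and> (Q @ [s]) ! (i - 1) = E \<and> (Q @ [s]) ! i = N}"
    proof (cases "i \<in> ?A")
      case True then show ?thesis by (auto simp: nth_append)
    next
      case False
      then have c: "s = N \<and> Q \<noteq> [] \<and> last Q = E" "i = ?L" using i by (auto split: if_splits)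
      then show ?thesis by (auto simp: nth_append last_conv_nth Suc_le_eq)
    qed
  qed
  have fin: "finite ?A" by (rule finite_subset[of _ "{..<?L}"]) auto
  have "card (?A \<union> (if s = N \<and> Q \<noteq> [] \<and> last Q = E then {?L} else {}))
     = card ?A + (if s = N \<and> Q \<noteq> [] \<and> last Q = E then 1 else 0)"
    using fin by (auto simp: card_insert_if)
  then show ?thesis unfolding valley_def eq by simp
qed

lemma enor_snoc: "enor (Q @ [s]) = enor Q + (if odd (length Q) \<and> s = N then 1 else 0)"
proof -
  let ?L = "length Q"
  let ?A = "{i \<in> {1 .. ?L div 2}. Q ! (2 * i - 1) = N}"
  have eq: "{i \<in> {1 .. length (Q @ [s]) div 2}. (Q @ [s]) ! (2 * i - 1) = N}
     = ?A \<union> (if odd ?L \<and> s = N then {Suc ?L div 2} else {})"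
  proof (intro set_eqI iffI)
    fix i assume i: "i \<in> {i \<in> {1 .. length (Q @ [s]) div 2}. (Q @ [s]) ! (2 * i - 1) = N}"
    show "i \<in> ?A \<union> (if odd ?L \<and> s = N then {Suc ?L div 2} else {})"
    proof (cases "i \<le> ?L div 2")
      case True
      then have "2 * i - 1 < ?L" using i by auto
      then show ?thesis using i True by (auto simp: nth_append)
    next
      case False
      then have "odd ?L" "i = Suc ?L div 2" using i by auto
      moreover then have "2 * i - 1 = ?L" by presburger
      ultimately show ?thesis using i by (auto simp: nth_append)
    qed
  next
    fix i assume i: "i \<in> ?A \<union> (if odd ?L \<and> s = N then {Suc ?L div 2} else {})"
    show "i \<in> {i \<in> {1 .. length (Q @ [s]) div 2}. (Q @ [s]) ! (2 * i - 1) = N}"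
    proof (cases "i \<in> ?A")
      case True
      then have "2 * i - 1 < ?L" by auto
      then show ?thesis using True by (auto simp: nth_append)
    next
      case False
      then have c: "odd ?L" "s = N" "i = Suc ?L div 2" using i by (auto split: if_splits)
      moreover then have "2 * i - 1 = ?L" by presburger
      moreover have "1 \<le> i" using c by presburger
      ultimately show ?thesis by (auto simp: nth_append)
    qed
  qed
  have fin: "finite ?A" by simp
  have nin: "Suc ?L div 2 \<notin> ?A" if "odd ?L" using that by auto
  have "card (?A \<union> (if odd ?L \<and> s = N then {Suc ?L div 2} else {}))
     = card ?A + (if odd ?L \<and> s = N then 1 else 0)"
    using fin nin by (auto simp: card_insert_if)
  then show ?thesis unfolding enor_def eq by simp
qed


lemma valley_Nil[simp]: "valley [] = 0" by (simp add: valley_def)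
lemma enor_Nil[simp]: "enor [] = 0" by (simp add: enor_def)

lemma S_len: "Q \<in> S x y \<Longrightarrow> length Q = x + y"
  using count_len[of Q] by (simp add: S_def)

definition fE :: "nat \<Rightarrow> nat \<Rightarrow> nat \<Rightarrow> nat" where
  "fE x y k = card {P \<in> S x y. P \<noteq> [] \<and> last P = E \<and> valley P = k}"
definition gN :: "nat \<Rightarrow> nat \<Rightarrow> nat \<Rightarrow> nat" where
  "gN x y k = card {P \<in> S x y. P \<noteq> [] \<and> last P = N \<and> valley P = k}"
definition hh :: "nat \<Rightarrow> nat \<Rightarrow> nat \<Rightarrow> nat" where
  "hh x y k = card {P \<in> S x y. enor P = k}"

lemma fE_empty: "y < x \<Longrightarrow> fE x y k = 0" by (simp add: fE_def S_empty)
lemma gN_empty: "y < x \<Longrightarrow> gN x y k = 0" by (simp add: gN_def S_empty)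
lemma hh_empty: "y < x \<Longrightarrow> hh x y k = 0" by (simp add: hh_def S_empty)

lemma fE0: "fE 0 y k = 0"
  unfolding fE_def using card_lastE[of 0 y "\<lambda>P. valley P = k"] by simp
lemma gN0: "gN x 0 k = 0"
  unfolding gN_def using card_lastN[of x 0 "\<lambda>P. valley P = k"] by simp

lemma rec_f: assumes "1 \<le> x" "x \<le> y" shows "fE x y k = fE (x-1) y k + gN (x-1) y k"
proof -
  have "fE x y k = card {Q \<in> S (x-1) y. valley (Q @ [E]) = k}"
    unfolding fE_def using card_lastE[of x y "\<lambda>P. valley P = k"] assms by simp
  also have "\<dots> = card {Q \<in> S (x-1) y. valley Q = k}" by (simp add: valley_snoc)
  also have "\<dots> = fE (x-1) y k + gN (x-1) y k"
    using card_split3[of "x-1" y "\<lambda>Q. valley Q = k"] assms by (simp add: fE_def gN_def)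
  finally show ?thesis .
qed

lemma rec_g: assumes "1 \<le> y"
  shows "gN x y k = (if x = 0 \<and> y = 1 \<and> k = 0 then 1 else 0)
     + (if k = 0 then 0 else fE x (y-1) (k-1)) + gN x (y-1) k"
proof -
  have "gN x y k = card {Q \<in> S x (y-1). valley (Q @ [N]) = k}"
    unfolding gN_def using card_lastN[of x y "\<lambda>P. valley P = k"] assms by simp
  also have "\<dots> = card {Q \<in> S x (y-1). valley Q + (if Q \<noteq> [] \<and> last Q = E then 1 else 0) = k}"
    by (simp add: valley_snoc)
  also have "\<dots> = (if x = 0 \<and> y - 1 = 0 \<and> 0 = k then 1 else 0)
      + card {Q \<in> S x (y-1). Q \<noteq> [] \<and> last Q = E \<and> valley Q + 1 = k}
      + card {Q \<in> S x (y-1). Q \<noteq> [] \<and> last Q = N \<and> valley Q = k}"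
    using card_split3[of x "y-1" "\<lambda>Q. valley Q + (if Q \<noteq> [] \<and> last Q = E then 1 else 0) = k"]
    by (simp cong: conj_cong)
  also have "card {Q \<in> S x (y-1). Q \<noteq> [] \<and> last Q = E \<and> valley Q + 1 = k}
      = (if k = 0 then 0 else fE x (y-1) (k-1))"
    by (cases k) (simp_all add: fE_def)
  finally show ?thesis using assms by (simp add: gN_def)
qed

lemma rec_h: assumes "1 \<le> x + y"
  shows "hh x y k = (if 1 \<le> x \<and> x \<le> y then hh (x-1) y k else 0)
     + (if 1 \<le> y then (if odd (x + y - 1) then (if k = 0 then 0 else hh x (y-1) (k-1)) else hh x (y-1) k) else 0)"
proof -
  have "hh x y k = card {P \<in> S x y. P \<noteq> [] \<and> last P = E \<and> enor P = k}
      + card {P \<in> S x y. P \<noteq> [] \<and> last P = N \<and> enor P = k}"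
  proof -
    have "\<not> (x = 0 \<and> y = 0)" using assms by auto
    then show ?thesis using card_split3[of x y "\<lambda>P. enor P = k"] by (auto simp: hh_def)
  qed
  moreover have "card {P \<in> S x y. P \<noteq> [] \<and> last P = E \<and> enor P = k}
      = (if 1 \<le> x \<and> x \<le> y then hh (x-1) y k else 0)"
    using card_lastE[of x y "\<lambda>P. enor P = k"] by (simp add: enor_snoc hh_def)
  moreover have "card {P \<in> S x y. P \<noteq> [] \<and> last P = N \<and> enor P = k}
      = (if 1 \<le> y then (if odd (x + y - 1) then (if k = 0 then 0 else hh x (y-1) (k-1)) else hh x (y-1) k) else 0)"
  proof (cases "1 \<le> y")
    case True
    have "card {P \<in> S x y. P \<noteq> [] \<and> last P = N \<and> enor P = k} = card {Q \<in> S x (y-1). enor (Q @ [N]) = k}"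
      using card_lastN[of x y "\<lambda>P. enor P = k"] True by simp
    also have "{Q \<in> S x (y-1). enor (Q @ [N]) = k} = {Q \<in> S x (y-1). enor Q + (if odd (x + y - 1) then 1 else 0) = k}"
      using True by (auto simp: enor_snoc S_len)
    finally show ?thesis using True by (cases k) (simp_all add: hh_def)
  next
    case False
    then show ?thesis using card_lastN[of x y "\<lambda>P. enor P = k"] by simp
  qed
  ultimately show ?thesis by simp
qed


lemma valley_count:
  "x \<le> y \<Longrightarrow> int (fE x y k) = F (int x) (int y) (int k) \<and>
     int (gN x y k) = (if x = 0 then (if 1 \<le> y \<and> k = 0 then 1 else 0) else G (int x) (int y) (int k))"
proof (induction "x+y" arbitrary: x y k rule: less_induct)
  case less
  show ?case
  proof (cases "y = 0")
    case True
    then have x0: "x = 0" using less.prems by simp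
    have "F 0 0 (int k) = 0" by (simp add: F_def bin_neg2 bin_gt)
    then show ?thesis using x0 True fE0 gN0 by simp
  next
    case False
    then have y1: "1 \<le> y" by simp
    have fpart: "int (fE x y k) = F (int x) (int y) (int k)"
    proof (cases "x = 0")
      case True
      have "F 0 (int y) (int k) = 0" by (simp add: F_def bin_neg2 bin_gt)
      then show ?thesis using True fE0 by simp
    next
      case False
      then have x1: "1 \<le> x" by simp
      have IH: "int (fE (x-1) y k) = F (int (x-1)) (int y) (int k) \<and>
         int (gN (x-1) y k) = (if x-1 = 0 then (if 1 \<le> y \<and> k = 0 then 1 else 0) else G (int (x-1)) (int y) (int k))"
        using less.hyps[of "x-1" y k] less.prems x1 by simp
      have r: "fE x y k = fE (x-1) y k + gN (x-1) y k" using rec_f x1 less.prems by simp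
      show ?thesis
      proof (cases "x = 1")
        case True
        have "F 1 (int y) (int k) = (if int k = 0 then 1 else 0)" using F1 y1 by simp
        then show ?thesis using IH r True fE0 y1 by simp
      next
        case False
        then have u1: "1 \<le> int (x-1)" using x1 by simp
        have e: "int (x-1) + 1 = int x" using x1 by simp
        have "F (int x) (int y) (int k) = F (int (x-1)) (int y) (int k) + G (int (x-1)) (int y) (int k)"
          using I1[OF u1, of "int y" "int k"] y1 unfolding e by simp
        then show ?thesis using IH r False x1 by simp
      qed
    qed
    have gpart: "int (gN x y k) = (if x = 0 then (if 1 \<le> y \<and> k = 0 then 1 else 0) else G (int x) (int y) (int k))"
    proof (cases "x \<le> y - 1")
      case True
      have r: "gN x y k = (if x = 0 \<and> y = 1 \<and> k = 0 then 1 else 0)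
         + (if k = 0 then 0 else fE x (y-1) (k-1)) + gN x (y-1) k" using rec_g y1 by simp
      have IHk: "int (fE x (y-1) j) = F (int x) (int (y-1)) (int j) \<and>
         int (gN x (y-1) j) = (if x = 0 then (if 1 \<le> y-1 \<and> j = 0 then 1 else 0) else G (int x) (int (y-1)) (int j))" for j
        using less.hyps[of x "y-1" j] True y1 by simp
      show ?thesis
      proof (cases "x = 0")
        case True
        then show ?thesis using r IHk[of k] fE0 y1 by auto
      next
        case False
        then have x1: "1 \<le> int x" by simp
        have xy: "int x \<le> int (y-1)" using True by simp
        have e: "int (y-1) + 1 = int y" using y1 by simp
        have I2': "G (int x) (int y) kk = G (int x) (int (y-1)) kk + F (int x) (int (y-1)) (kk - 1)" for kk
          using I2[OF x1 xy, of kk] unfolding e .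
        show ?thesis
        proof (cases k)
          case 0
          have "F (int x) (int (y-1)) (-1) = 0" by (simp add: F_def bin_neg1)
          then show ?thesis using r IHk[of 0] I2'[of 0] False 0 by simp
        next
          case (Suc j)
          then show ?thesis using r IHk[of j] IHk[of k] I2'[of "int k"] False by simp
        qed
      qed
    next
      case False
      then have xy: "x = y" "1 \<le> x" using less.prems y1 by auto
      have r: "gN x y k = (if x = 0 \<and> y = 1 \<and> k = 0 then 1 else 0)
         + (if k = 0 then 0 else fE x (y-1) (k-1)) + gN x (y-1) k" using rec_g y1 by simp
      have "fE x (y-1) (k-1) = 0" "gN x (y-1) k = 0" using fE_empty gN_empty xy by auto
      then show ?thesis using r xy I3 by simp
    qed
    show ?thesis using fpart gpart by simp
  qed
qed

lemma par: "1 \<le> x + y \<Longrightarrow> odd (x + y - 1) \<longleftrightarrow> even (int x + int y)"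
proof -
  assume "1 \<le> x + y"
  then have "odd (x + y - 1) \<longleftrightarrow> even (x + y)" by presburger
  moreover have "even (int x + int y) \<longleftrightarrow> even (x + y)"
    by (metis of_nat_add even_of_nat)
  ultimately show ?thesis by simp
qed

lemma enor_count: "x \<le> y \<Longrightarrow> int (hh x y k) = H (int x) (int y) (int k)"
proof (induction "x+y" arbitrary: x y k rule: less_induct)
  case less
  show ?case
  proof (cases "y = 0")
    case True
    then have x0: "x = 0" using less.prems by simp
    have "{P \<in> S 0 0. enor P = k} = (if k = 0 then {[]} else {})" by (auto simp: S00)
    then have "hh 0 0 k = (if k = 0 then 1 else 0)" by (simp add: hh_def)
    then show ?thesis using x0 True H5 by simp
  next
    case False
    then have y1: "1 \<le> y" by simp
    have r: "hh x y k = (if 1 \<le> x \<and> x \<le> y then hh (x-1) y k else 0)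
     + (if 1 \<le> y then (if odd (x + y - 1) then (if k = 0 then 0 else hh x (y-1) (k-1)) else hh x (y-1) k) else 0)"
      using rec_h[of x y k] y1 by simp
    have t1: "int (if 1 \<le> x \<and> x \<le> y then hh (x-1) y k else 0) = H (int x - 1) (int y) (int k)"
    proof (cases "x = 0")
      case True then show ?thesis using H2[of "int y"] by simp
    next
      case False
      then show ?thesis using less.hyps[of "x-1" y k] less.prems by (simp add: of_nat_diff)
    qed
    have t2: "int (if odd (x + y - 1) then (if k = 0 then 0 else hh x (y-1) (k-1)) else hh x (y-1) k)
        = H (int x) (int y - 1) (int k - (if even (int x + int y) then 1 else 0))"
    proof (cases "x \<le> y - 1")
      case True
      have IH: "int (hh x (y-1) j) = H (int x) (int y - 1) (int j)" for j
        using less.hyps[of x "y-1" j] True y1 by (simp add: of_nat_diff)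
      have p: "odd (x + y - 1) \<longleftrightarrow> even (int x + int y)" using par y1 by simp
      show ?thesis
      proof (cases "even (int x + int y)")
        case True
        show ?thesis
        proof (cases k)
          case 0
          have "H (int x) (int y - 1) (-1) = 0" using H4[of "int x" "int y - 1"] \<open>x \<le> y - 1\<close> y1 by simp
          then show ?thesis using True p 0 by simp
        next
          case (Suc j) then show ?thesis using True p IH[of j] by simp
        qed
      next
        case False then show ?thesis using p IH[of k] by simp
      qed
    next
      case False
      then have xy: "x = y" using less.prems y1 by auto
      have "hh x (y-1) j = 0" for j using hh_empty xy y1 by simp
      moreover have "H (int x) (int y - 1) j = 0" for j
        using H3[of "int y - 1" j] xy y1 by simp
      ultimately show ?thesis by simp
    qed
    have "H (int x) (int y) (int k) = H (int x - 1) (int y) (int k) + H (int x) (int y - 1) (int k - (if even (int x + int y) then 1 else 0))"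
      using H1[of "int x" "int y" "int k"] y1 by simp
    then show ?thesis using r t1 t2 y1 by simp
  qed
qed


lemma sum_by_stat:
  fixes w :: "nat \<Rightarrow> 'b::comm_semiring_1"
  assumes "finite A" "\<forall>P\<in>A. g P \<le> M"
  shows "(\<Sum>P\<in>A. w (g P)) = (\<Sum>k=0..M. of_nat (card {P \<in> A. g P = k}) * w k)"
proof -
  have sub: "g ` A \<subseteq> {0..M}" using assms by auto
  show ?thesis using sum.group[of A "{0..M}" g "\<lambda>P. w (g P)"] assms sub by simp
qed

lemma final_sum:
  fixes a b :: complex
  assumes n1: "n \<ge> 1" and fin: "finite A" and bd: "\<forall>P\<in>A. g P \<le> 2 * n"
    and cnt: "\<And>k. int (card {P \<in> A. g P = k}) = F (int n) (int n) (int k)"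
  shows "(\<Sum>P\<in>A. a ^ (n - g P) * b ^ g P) =
    (\<Sum>k = 0..n - 1. (1 / of_nat n) * of_nat (n choose k) * of_nat (n choose (k + 1)) * a ^ (n - k) * b ^ k)"
proof -
  let ?T = "\<lambda>k. (1 / of_nat n) * of_nat (n choose k) * of_nat (n choose (k + 1)) * a ^ (n - k) * b ^ k :: complex"
  have c: "(of_nat (card {P \<in> A. g P = k}) :: complex) = (1 / of_nat n) * of_nat (n choose k) * of_nat (n choose (k + 1))" for k
  proof -
    have "int n * int (card {P \<in> A. g P = k}) = bin (int n) (int k) * bin (int n) (int k + 1)"
      using Ffin[of "int n" "int k"] n1 cnt[of k] by simp
    also have "\<dots> = int (n choose k) * int (n choose (k+1))"
      by (simp add: bin_def nat_add_distrib)
    finally have "n * card {P \<in> A. g P = k} = (n choose k) * (n choose (k+1))"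
      by (metis of_nat_eq_iff of_nat_mult)
    then have "(of_nat n :: complex) * of_nat (card {P \<in> A. g P = k}) = of_nat (n choose k) * of_nat (n choose (k+1))"
      by (metis of_nat_mult)
    moreover have "(of_nat n :: complex) \<noteq> 0" using n1 by simp
    ultimately show ?thesis by (simp add: field_simps)
  qed
  have "(\<Sum>P\<in>A. a ^ (n - g P) * b ^ g P) = (\<Sum>k=0..2*n. of_nat (card {P \<in> A. g P = k}) * (a ^ (n - k) * b ^ k))"
    using sum_by_stat[OF fin bd, of "\<lambda>k. a ^ (n - k) * b ^ k"] by simp
  also have "\<dots> = (\<Sum>k=0..2*n. ?T k)" using c by (simp add: mult.assoc)
  also have "\<dots> = (\<Sum>k=0..n-1. ?T k)"
  proof (rule sum.mono_neutral_right)
    show "\<forall>i\<in>{0..2*n} - {0..n-1}. ?T i = 0"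
    proof
      fix i assume "i \<in> {0..2*n} - {0..n-1}"
      then have "n < i + 1" using n1 by auto
      then show "?T i = 0" by simp
    qed
  qed auto
  finally show ?thesis .
qed

lemma cat_S: "catalan_paths n = S n n"
  unfolding catalan_paths_def catalan_path_def S_def okp_def
  using count_len by (auto, metis count_len mult_2)

theorem theorem4p1:
  fixes n :: nat and a b :: complex
  assumes "n \<ge> 1"
  shows "(\<Sum>P\<in>catalan_paths n. a ^ (n - enor P) * b ^ enor P)
           = (\<Sum>P\<in>catalan_paths n. a ^ (n - valley P) * b ^ valley P)
       \<and> (\<Sum>P\<in>catalan_paths n. a ^ (n - valley P) * b ^ valley P)
           = (\<Sum>k = 0..n - 1. (1 / of_nat n) * of_nat (n choose k) * of_nat (n choose (k + 1))
                                * a ^ (n - k) * b ^ k)"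
proof -
  have fin: "finite (catalan_paths n)" unfolding cat_S by (rule S_finite)
  have len: "P \<in> catalan_paths n \<Longrightarrow> length P = 2 * n" for P
    using S_len[of P n n] unfolding cat_S by simp
  have bv: "\<forall>P\<in>catalan_paths n. valley P \<le> 2 * n"
  proof
    fix P assume P: "P \<in> catalan_paths n"
    have "valley P \<le> card {..<length P}" unfolding valley_def by (rule card_mono) auto
    then show "valley P \<le> 2 * n" using len[OF P] by simp
  qed
  have be: "\<forall>P\<in>catalan_paths n. enor P \<le> 2 * n"
  proof
    fix P assume P: "P \<in> catalan_paths n"
    have "enor P \<le> card {1..length P div 2}" unfolding enor_def by (rule card_mono) auto
    then show "enor P \<le> 2 * n" using len[OF P] by simp
  qed
  have cv: "int (card {P \<in> catalan_paths n. valley P = k}) = F (int n) (int n) (int k)" for k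
  proof -
    have "card {P \<in> S n n. valley P = k} = fE n n k + gN n n k"
      using card_split3[of n n "\<lambda>P. valley P = k"] assms by (simp add: fE_def gN_def)
    moreover have "int (gN n n k) = 0" using valley_count[of n n k] assms I3 by simp
    moreover have "int (fE n n k) = F (int n) (int n) (int k)" using valley_count[of n n k] by simp
    ultimately show ?thesis unfolding cat_S by simp
  qed
  have ce: "int (card {P \<in> catalan_paths n. enor P = k}) = F (int n) (int n) (int k)" for k
  proof -
    have "int (card {P \<in> catalan_paths n. enor P = k}) = H (int n) (int n) (int k)"
      using enor_count[of n n k] unfolding cat_S hh_def by simp
    then show ?thesis using Hfin[of "int n" "int k"] assms by simp
  qed
  show ?thesis
    using final_sum[OF assms fin be ce, of a b] final_sum[OF assms fin bv cv, of a b] by simp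
qed

end
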